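(* Let $p$ be a ProbNetKAT program, $S=\mathcal{S}[\![p]\!]$ and $U$ as defined in the context. Each of the Markov chains $S$, $U$ and $SU$ (matrix product) is monotone: if $(a,b)$ can reach $(a',b')$ in $T\in\{S,U,SU\}$, i.e. $(T^n)_{(a,b),(a',b')}>0$ for some $n\ge 0$, then $b\subseteq b'$.
   Context: $\mathsf{Pk}$ is a finite set of packets; $[\varphi]$ is the Iverson bracket. For a ProbNetKAT program $p$, $\mathcal{B}[\![p]\!]\in[0,1]^{2^{\mathsf{Pk}}\times 2^{\mathsf{Pk}}}$ is its (stochastic) matrix semantics, where $\mathcal{B}[\![p]\!]_{ab}$ is the probability that $p$ outputs packet set $b$ on input packet set $a$. The small-step matrix on states $(a,b)\in 2^{\mathsf{Pk}}\times 2^{\mathsf{Pk}}$ is $S_{(a,b),(a',b')}=[b'=b\cup a]\,\mathcal{B}[\![p]\!]_{a,a'}$. A state $(a,b)$ is saturated if whenever $(a,b)$ can reach $(a',b')$ in $S$ (i.e. $(S^n)_{(a,b),(a',b')}>0$ for some $n\ge0$) we have $b'=b$. The matrix $U$ is $U_{(a,b),(a',b')}=[b'=b]\cdot[a'=\emptyset]$ if $(a,b)$ is saturated and $U_{(a,b),(a',b')}=[b'=b]\cdot[a'=a]$ otherwise. *)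

theory Defs
  imports Complex_Main
begin

type_synonym ('f,'v) pkt = "'f \<Rightarrow> 'v"

datatype ('f,'v) pred =
    PFalse
  | PTrue
  | PTest 'f 'v
  | PNot "('f,'v) pred"
  | PAnd "('f,'v) pred" "('f,'v) pred"
  | POr "('f,'v) pred" "('f,'v) pred"

datatype ('f,'v) prog =
    Pred "('f,'v) pred"
  | Assign 'f 'v
  | Par "('f,'v) prog" "('f,'v) prog"
  | Seq "('f,'v) prog" "('f,'v) prog"
  | Choice "('f,'v) prog" real "('f,'v) prog"
  | Star "('f,'v) prog"

abbreviation Drop where "Drop \<equiv> Pred PFalse"
abbreviation Skip where "Skip \<equiv> Pred PTrue"

fun wf_prog :: "('f,'v) prog \<Rightarrow> bool" where
  "wf_prog (Pred t) = True"
| "wf_prog (Assign f n) = True"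
| "wf_prog (Par p q) = (wf_prog p \<and> wf_prog q)"
| "wf_prog (Seq p q) = (wf_prog p \<and> wf_prog q)"
| "wf_prog (Choice p r q) = (0 \<le> r \<and> r \<le> 1 \<and> wf_prog p \<and> wf_prog q)"
| "wf_prog (Star p) = wf_prog p"

fun holds :: "('f,'v) pred \<Rightarrow> ('f,'v) pkt \<Rightarrow> bool" where
  "holds PFalse \<pi> = False"
| "holds PTrue \<pi> = True"
| "holds (PTest f n) \<pi> = (\<pi> f = n)"
| "holds (PNot t) \<pi> = (\<not> holds t \<pi>)"
| "holds (PAnd t u) \<pi> = (holds t \<pi> \<and> holds u \<pi>)"
| "holds (POr t u) \<pi> = (holds t \<pi> \<or> holds u \<pi>)"

type_synonym 'i mat = "'i \<Rightarrow> 'i \<Rightarrow> real"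

definition mmult :: "('i::finite) mat \<Rightarrow> 'i mat \<Rightarrow> 'i mat" where
  "mmult A B = (\<lambda>i k. \<Sum>j\<in>UNIV. A i j * B j k)"

definition mid :: "('i::finite) mat" where
  "mid = (\<lambda>i j. if i = j then 1 else 0)"

primrec mpow :: "('i::finite) mat \<Rightarrow> nat \<Rightarrow> 'i mat" where
  "mpow A 0 = mid"
| "mpow A (Suc n) = mmult (mpow A n) A"

definition reach :: "('i::finite) mat \<Rightarrow> 'i \<Rightarrow> 'i \<Rightarrow> bool" where
  "reach T s s' = (\<exists>n. mpow T n s s' > 0)"

text \<open>Big-step matrix semantics B[[p]] on packet sets.  The star is the limit
of the approximants p^(0) = skip, p^(n+1) = skip & p ; p^(n).\<close>

fun Bsem :: "('f::finite,'v::finite) prog \<Rightarrow> ('f,'v) pkt set mat" where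
  "Bsem (Pred t) = (\<lambda>a b. if b = {\<pi>\<in>a. holds t \<pi>} then 1 else 0)"
| "Bsem (Assign f n) = (\<lambda>a b. if b = (\<lambda>\<pi>. \<pi>(f := n)) ` a then 1 else 0)"
| "Bsem (Par p q) = (\<lambda>a b. \<Sum>c\<in>UNIV. \<Sum>d\<in>UNIV.
      (if c \<union> d = b then 1 else 0) * Bsem p a c * Bsem q a d)"
| "Bsem (Seq p q) = mmult (Bsem p) (Bsem q)"
| "Bsem (Choice p r q) = (\<lambda>a b. r * Bsem p a b + (1 - r) * Bsem q a b)"
| "Bsem (Star p) = (\<lambda>a b. lim (\<lambda>n. ((\<lambda>M. (\<lambda>a' b'. \<Sum>c\<in>UNIV. \<Sum>d\<in>UNIV.
      (if c \<union> d = b' then 1 else 0) * (if c = a' then 1 else 0) * mmult (Bsem p) M a' d)) ^^ n)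
      (\<lambda>a' b'. if b' = a' then 1 else 0) a b))"

definition Ssmall :: "('f::finite,'v::finite) prog \<Rightarrow> (('f,'v) pkt set \<times> ('f,'v) pkt set) mat" where
  "Ssmall p = (\<lambda>(a,b) (a',b'). (if b' = b \<union> a then 1 else 0) * Bsem p a a')"

definition saturated :: "('f::finite,'v::finite) prog \<Rightarrow> ('f,'v) pkt set \<times> ('f,'v) pkt set \<Rightarrow> bool" where
  "saturated p s = (\<forall>a' b'. reach (Ssmall p) s (a',b') \<longrightarrow> b' = snd s)"

definition Umat :: "('f::finite,'v::finite) prog \<Rightarrow> (('f,'v) pkt set \<times> ('f,'v) pkt set) mat" where
  "Umat p = (\<lambda>(a,b) (a',b'). if saturated p (a,b)
      then (if b' = b \<and> a' = {} then 1 else 0)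
      else (if b' = b \<and> a' = a then 1 else 0))"

end

theory Submission
  imports Defs
begin

lemma mmult_nz:
  assumes "mmult A B x y \<noteq> 0"
  shows "\<exists>j. A x j \<noteq> 0 \<and> B j y \<noteq> 0"
proof (rule ccontr)
  assume "\<not> ?thesis"
  hence "\<forall>j. A x j * B j y = 0" by auto
  hence "mmult A B x y = 0" unfolding mmult_def by (simp add: sum.neutral)
  with assms show False by simp
qed

lemma mpow_supp:
  fixes T :: "('i::finite \<times> 'j::finite set) mat"
  assumes "\<And>x y. T x y \<noteq> 0 \<Longrightarrow> snd x \<subseteq> snd y"
  shows "mpow T n x y \<noteq> 0 \<Longrightarrow> snd x \<subseteq> snd y"
proof (induction n arbitrary: y)
  case 0
  then show ?case by (auto simp: mid_def split: if_splits)
next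
  case (Suc n)
  then obtain j where "mpow T n x j \<noteq> 0" "T j y \<noteq> 0" using mmult_nz by fastforce
  then show ?case using Suc.IH assms by blast
qed

lemma reach_supp:
  fixes T :: "('i::finite \<times> 'j::finite set) mat"
  assumes "\<And>x y. T x y \<noteq> 0 \<Longrightarrow> snd x \<subseteq> snd y"
  shows "reach T (a, b) (a', b') \<Longrightarrow> b \<subseteq> b'"
  unfolding reach_def using mpow_supp[OF assms] by (metis less_irrefl snd_conv)

lemma S_supp: "Ssmall p x y \<noteq> 0 \<Longrightarrow> snd x \<subseteq> snd y"
  by (cases x; cases y) (auto simp: Ssmall_def split: if_splits)

lemma U_supp: "Umat p x y \<noteq> 0 \<Longrightarrow> snd x \<subseteq> snd y"
  by (cases x; cases y) (auto simp: Umat_def split: if_splits)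

lemma SU_supp: "mmult (Ssmall p) (Umat p) x y \<noteq> 0 \<Longrightarrow> snd x \<subseteq> snd y"
  using mmult_nz S_supp U_supp by blast

theorem lemma4p5:
  fixes p :: "('f::finite, 'v::finite) prog"
  assumes "wf_prog p"
  shows "\<forall>T \<in> {Ssmall p, Umat p, mmult (Ssmall p) (Umat p)}.
           \<forall>a b a' b'. reach T (a, b) (a', b') \<longrightarrow> b \<subseteq> b'"
proof -
  have 1: "reach (Ssmall p) (a, b) (a', b') \<Longrightarrow> b \<subseteq> b'" for a b a' b'
    by (rule reach_supp[OF S_supp])
  have 2: "reach (Umat p) (a, b) (a', b') \<Longrightarrow> b \<subseteq> b'" for a b a' b'
    by (rule reach_supp[OF U_supp])
  have 3: "reach (mmult (Ssmall p) (Umat p)) (a, b) (a', b') \<Longrightarrow> b \<subseteq> b'" for a b a' b'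
    by (rule reach_supp[OF SU_supp])
  show ?thesis using 1 2 3 by simp
qed

end
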